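(* Let $X$ be a finite-dimensional real Hilbert space, let $C$ be a nonempty closed convex subset of $X$, and let $x\in X$. Then there exists a face $F$ of $C$ such that \[ P_C x = P_{\operatorname{aff} F}\, x . \]
   Context: For a nonempty closed convex set $S\subseteq X$, $P_S$ denotes the orthogonal (nearest-point) projector onto $S$. A subset $F$ of a convex set $C$ is a face of $C$ if whenever $x,y\in C$ and the open segment $]x,y[$ meets $F$, then $x,y\in F$ (in particular $C$ is a face of itself). $\operatorname{aff} F$ denotes the affine hull of $F$, i.e. the smallest affine subspace containing $F$ (which is closed since $X$ is finite-dimensional). *)

theory Defs
  imports "HOL-Analysis.Analysis"
begin

definition is_face :: "'a::real_vector set \<Rightarrow> 'a set \<Rightarrow> bool" where
  "is_face F C \<longleftrightarrow> F \<subseteq> C \<and>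
     (\<forall>x\<in>C. \<forall>y\<in>C. open_segment x y \<inter> F \<noteq> {} \<longrightarrow> x \<in> F \<and> y \<in> F)"

end

theory Submission
  imports Defs
begin

lemma face_of_is_face: "F face_of C \<Longrightarrow> is_face F C"
  unfolding face_of_def is_face_def by blast

theorem corollary2p4:
  fixes C :: "'a::euclidean_space set" and x :: 'a
  assumes "C \<noteq> {}" and "closed C" and "convex C"
  shows "\<exists>F. is_face F C \<and> F \<noteq> {} \<and> closest_point C x = closest_point (affine hull F) x"
proof -
  define p where "p = closest_point C x"
  define v where "v = x - p"
  have pC: "p \<in> C" unfolding p_def using assms closest_point_in_set by blast
  have le: "v \<bullet> y \<le> v \<bullet> p" if "y \<in> C" for y
    using closest_point_dot[OF assms(3,2) that, of x] unfolding v_def p_def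
    by (simp add: inner_diff_right)
  define F where "F = C \<inter> {y. v \<bullet> y = v \<bullet> p}"
  have face: "F face_of C" unfolding F_def
    by (rule face_of_Int_supporting_hyperplane_le[OF assms(3)]) (use le in auto)
  have pF: "p \<in> F" unfolding F_def using pC by auto
  have aff: "affine hull F \<subseteq> {y. v \<bullet> y = v \<bullet> p}"
    by (rule hull_minimal) (auto simp: F_def affine_hyperplane)
  have "p = closest_point (affine hull F) x"
  proof (rule closest_point_unique)
    show "convex (affine hull F)" by (simp add: affine_imp_convex)
    show "closed (affine hull F)" by simp
    show "p \<in> affine hull F" using pF by (rule hull_inc)
    show "\<forall>z\<in>affine hull F. dist x p \<le> dist x z"
    proof
      fix z assume "z \<in> affine hull F"
      then have vz: "v \<bullet> (p - z) = 0" using aff by (auto simp: inner_diff_right)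
      have "x - z = v + (p - z)" unfolding v_def by simp
      moreover have "(norm (v + (p - z)))^2 = (norm v)^2 + (norm (p - z))^2"
        using vz by (intro norm_add_Pythagorean) (simp add: orthogonal_def)
      ultimately have "(norm (x - z))^2 = (norm v)^2 + (norm (p - z))^2" by (simp only:)
      then have "(norm v)^2 \<le> (norm (x - z))^2" by simp
      then have "norm v \<le> norm (x - z)" by (simp add: power2_le_iff_abs_le)
      then show "dist x p \<le> dist x z" by (simp add: dist_norm v_def)
    qed
  qed
  then show ?thesis using face face_of_is_face pF unfolding p_def by blast
qed

end
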